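(* Let $A$ be a non-zero $p\times p$ adjacency matrix and let $\lambda_{min}$ be the least eigenvalue of $A$. Then $t_{cp}=t_{ppt}=-p\,\lambda_{min}$.
   Context: An adjacency matrix is a self-adjoint $p\times p$ matrix $A=(a_{i,j})$ with entries in $\{0,1\}$ and zero diagonal (the adjacency matrix of a simple graph on $p$ vertices). For a matrix $A$, $S_A: M_p\to M_p$ is the Schur product map $S_A(B)=(a_{i,j}b_{i,j})$. Let $tr(X)=\frac1p\mathrm{Tr}(X)$ be the normalized trace and $\delta: M_p\to M_p$, $\delta(X)=tr(X)I_p$. For real $t$ define $\gamma_t=t\delta+S_A$. Set $t_{cp}=\min\{t:\gamma_t\text{ is completely positive}\}$ and $t_{ppt}=\min\{t:\gamma_t\text{ is PPT}\}$, where a completely positive map $\phi:M_p\to M_p$ is PPT if $T\circ\phi$ is completely positive, $T$ the transpose on $M_p$. *)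

theory Defs
  imports "Jordan_Normal_Form.Schur_Decomposition" "Jordan_Normal_Form.Char_Poly"
begin

definition adjacency_matrix :: "nat \<Rightarrow> real mat \<Rightarrow> bool" where
  "adjacency_matrix p A \<longleftrightarrow> A \<in> carrier_mat p p \<and> A\<^sup>T = A
     \<and> (\<forall>i<p. \<forall>j<p. A $$ (i,j) = 0 \<or> A $$ (i,j) = 1)
     \<and> (\<forall>i<p. A $$ (i,i) = 0)"

text \<open>Least eigenvalue (A is real symmetric, so its eigenvalues are real).\<close>
definition lambda_min :: "real mat \<Rightarrow> real" where
  "lambda_min A = Min {k. eigenvalue A k}"

definition psd :: "nat \<Rightarrow> complex mat \<Rightarrow> bool" where
  "psd n X \<longleftrightarrow> X \<in> carrier_mat n n \<and> mat_adjoint X = X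
     \<and> (\<forall>v \<in> carrier_vec n. Im (conjugate v \<bullet> (X *\<^sub>v v)) = 0
                              \<and> 0 \<le> Re (conjugate v \<bullet> (X *\<^sub>v v)))"

definition positive_map :: "nat \<Rightarrow> (complex mat \<Rightarrow> complex mat) \<Rightarrow> bool" where
  "positive_map p \<phi> \<longleftrightarrow> (\<forall>X. psd p X \<longrightarrow> psd p (\<phi> X))"

text \<open>The amplification id_n \<otimes> \<phi> : M_n(M_p) \<rightarrow> M_n(M_p), an element of M_n(M_p)
  being an (n p) x (n p) matrix whose (i,j) block (p x p) is rows i p .. i p + p - 1,
  columns j p .. j p + p - 1; \<phi> is applied blockwise.\<close>
definition ampl :: "nat \<Rightarrow> nat \<Rightarrow> (complex mat \<Rightarrow> complex mat) \<Rightarrow> complex mat \<Rightarrow> complex mat" where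
  "ampl n p \<phi> X = mat (n*p) (n*p) (\<lambda>(r,c).
      \<phi> (mat p p (\<lambda>(a,b). X $$ (r div p * p + a, c div p * p + b))) $$ (r mod p, c mod p))"

definition completely_positive :: "nat \<Rightarrow> (complex mat \<Rightarrow> complex mat) \<Rightarrow> bool" where
  "completely_positive p \<phi> \<longleftrightarrow>
     (\<forall>n. \<forall>X. psd (n*p) X \<longrightarrow> psd (n*p) (ampl n p \<phi> X))"

definition is_PPT :: "nat \<Rightarrow> (complex mat \<Rightarrow> complex mat) \<Rightarrow> bool" where
  "is_PPT p \<phi> \<longleftrightarrow> completely_positive p \<phi> \<and> completely_positive p (\<lambda>X. (\<phi> X)\<^sup>T)"

definition ntr :: "nat \<Rightarrow> complex mat \<Rightarrow> complex" where
  "ntr p X = (\<Sum>i<p. X $$ (i,i)) / of_nat p"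

definition delta_map :: "nat \<Rightarrow> complex mat \<Rightarrow> complex mat" where
  "delta_map p X = ntr p X \<cdot>\<^sub>m 1\<^sub>m p"

definition schur_map :: "real mat \<Rightarrow> complex mat \<Rightarrow> complex mat" where
  "schur_map A B = mat (dim_row A) (dim_col A) (\<lambda>(i,j). complex_of_real (A $$ (i,j)) * B $$ (i,j))"

definition gamma :: "real mat \<Rightarrow> real \<Rightarrow> complex mat \<Rightarrow> complex mat" where
  "gamma A t X = complex_of_real t \<cdot>\<^sub>m delta_map (dim_row A) X + schur_map A X"

definition t_cp :: "real mat \<Rightarrow> real" where
  "t_cp A = (LEAST t. completely_positive (dim_row A) (gamma A t))"

definition t_ppt :: "real mat \<Rightarrow> real" where
  "t_ppt A = (LEAST t. is_PPT (dim_row A) (gamma A t))"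

end

theory Submission
  imports Defs "HOL-Analysis.Function_Topology"
begin

lemma adj_idx: "i < dim_col A \<Longrightarrow> j < dim_row A \<Longrightarrow> mat_adjoint A $$ (i,j) = conjugate (A $$ (j,i))"
  unfolding mat_adjoint_def by (simp add: mat_of_rows_def)
lemma adj_dim: "dim_row (mat_adjoint A) = dim_col A" "dim_col (mat_adjoint A) = dim_row A"
  unfolding mat_adjoint_def by (auto simp: mat_of_rows_def)
lemma sum_blocks: fixes n p :: nat shows "(\<Sum>i<n*p. f i) = (\<Sum>r<n. \<Sum>a<p. f (r*p+a))"
proof (induction n)
  case 0 then show ?case by simp
next
  case (Suc n)
  have U: "{..<Suc n * p} = {..<n*p} \<union> {n*p..<n*p+p}" by auto
  have "(\<Sum>i<Suc n*p. f i) = (\<Sum>i<n*p. f i) + (\<Sum>i\<in>{n*p..<n*p+p}. f i)"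
    unfolding U by (rule sum.union_disjoint) auto
  also have "(\<Sum>i\<in>{n*p..<n*p+p}. f i) = (\<Sum>a<p. f (n*p+a))"
    by (rule sum.reindex_bij_witness[of _ "\<lambda>a. n*p+a" "\<lambda>i. i - n*p"]) auto
  finally show ?case using Suc by simp
qed
lemma quad_form: assumes "X \<in> carrier_mat m m" "v \<in> carrier_vec m"
  shows "conjugate v \<bullet> (X *\<^sub>v v) = (\<Sum>i<m. conjugate (v$i) * (\<Sum>j<m. X$$(i,j) * v$j))"
  using assms by (auto simp: scalar_prod_def lessThan_atLeast0 intro!: sum.cong)
lemma blk_lt: fixes r n a p :: nat assumes "r < n" "a < p" shows "r*p+a < n*p"
proof -
  have "r*p+a < (r+1)*p" using assms by simp
  also have "(r+1)*p \<le> n*p" using assms by (intro mult_le_mono1) simp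
  finally show ?thesis .
qed

lemma conj_complex: "conjugate (x::complex) = cnj x"
  by (simp add: conjugate_complex_def)

lemma psd_herm: assumes "psd m X" "i < m" "j < m" shows "X $$ (j,i) = cnj (X $$ (i,j))"
proof -
  from assms have X: "X \<in> carrier_mat m m" and adj: "mat_adjoint X = X" unfolding psd_def by auto
  have "X $$ (j,i) = mat_adjoint X $$ (j,i)" using adj by simp
  also have "\<dots> = conjugate (X $$ (i,j))" using X assms by (subst adj_idx) auto
  finally show ?thesis by (simp add: conj_complex)
qed

lemma psd_block: fixes y :: "nat \<Rightarrow> nat \<Rightarrow> complex"
  assumes "psd (n*p) X"
  shows "0 \<le> Re (\<Sum>r<n. \<Sum>e<p. \<Sum>s<n. \<Sum>f<p. cnj (y r e) * X$$(r*p+e, s*p+f) * y s f)"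
proof -
  define v where "v = vec (n*p) (\<lambda>i. y (i div p) (i mod p))"
  have X: "X \<in> carrier_mat (n*p) (n*p)" using assms unfolding psd_def by auto
  have v: "v \<in> carrier_vec (n*p)" unfolding v_def by auto
  have "0 \<le> Re (conjugate v \<bullet> (X *\<^sub>v v))" using assms v unfolding psd_def by blast
  also have "conjugate v \<bullet> (X *\<^sub>v v) = (\<Sum>i<n*p. conjugate (v$i) * (\<Sum>j<n*p. X$$(i,j) * v$j))"
    by (rule quad_form[OF X v])
  also have "\<dots> = (\<Sum>r<n. \<Sum>e<p. \<Sum>s<n. \<Sum>f<p. cnj (y r e) * X$$(r*p+e, s*p+f) * y s f)"
  proof -
    have vi: "v $ (r*p+e) = y r e" if "r < n" "e < p" for r e
    proof -
      have "r*p+e < n*p" using that by (rule blk_lt)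
      thus ?thesis using that unfolding v_def by simp
    qed
    show ?thesis
      unfolding sum_blocks
      by (intro sum.cong refl) (simp add: vi conj_complex sum_distrib_left mult.assoc)
  qed
  finally show ?thesis .
qed

definition Bw :: "nat \<Rightarrow> nat \<Rightarrow> complex mat \<Rightarrow> (nat\<Rightarrow>nat\<Rightarrow>complex) \<Rightarrow> nat\<Rightarrow>nat\<Rightarrow>nat\<Rightarrow>nat\<Rightarrow>complex" where
  "Bw n p X U a c b d = (\<Sum>r<n. \<Sum>s<n. cnj(U r a) * X$$(r*p+c, s*p+d) * U s b)"

definition Qf :: "nat \<Rightarrow> nat \<Rightarrow> complex mat \<Rightarrow> (nat\<Rightarrow>nat\<Rightarrow>complex) \<Rightarrow> (nat\<Rightarrow>nat\<Rightarrow>complex) \<Rightarrow> complex" where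
  "Qf n p X y z = (\<Sum>r<n. \<Sum>e<p. \<Sum>s<n. \<Sum>f<p. cnj (y r e) * X$$(r*p+e, s*p+f) * z s f)"

lemma Qf_psd: "psd (n*p) X \<Longrightarrow> 0 \<le> Re (Qf n p X y y)"
  unfolding Qf_def by (rule psd_block)

lemma Qf_add: "Qf n p X (\<lambda>r e. y1 r e + y2 r e) (\<lambda>r e. y1 r e + y2 r e) =
   Qf n p X y1 y1 + Qf n p X y1 y2 + Qf n p X y2 y1 + Qf n p X y2 y2"
  unfolding Qf_def by (simp add: distrib_left distrib_right sum.distrib)

lemma ifz1: "x * (if P then y else 0) = (if P then x * y else (0::complex))" by simp
lemma ifz2: "(if P then y else 0) * x = (if P then y * x else (0::complex))" by simp

lemma Qf_collapse: assumes "c < p" "d < p"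
  shows "Qf n p X (\<lambda>r e. if e = c then V r else 0) (\<lambda>r e. if e = d then W r else 0)
    = (\<Sum>r<n. \<Sum>s<n. cnj (V r) * X$$(r*p+c, s*p+d) * W s)"
proof -
  have "Qf n p X (\<lambda>r e. if e = c then V r else 0) (\<lambda>r e. if e = d then W r else 0)
     = (\<Sum>r<n. \<Sum>e<p. if e = c then (\<Sum>s<n. cnj (V r) * X$$(r*p+c, s*p+d) * W s) else 0)"
    unfolding Qf_def
    by (intro sum.cong refl) (auto simp: ifz1 ifz2 sum.delta' assms)
  also have "\<dots> = (\<Sum>r<n. \<Sum>s<n. cnj (V r) * X$$(r*p+c, s*p+d) * W s)"
    using assms by (simp add: sum.delta')
  finally show ?thesis .
qed

lemma Bw_i: assumes "psd (n*p) X" "c < p" shows "0 \<le> Re (Bw n p X U a c a c)"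
  using Qf_psd[OF assms(1), of "\<lambda>r e. if e = c then U r a else 0"]
  unfolding Qf_collapse[OF assms(2) assms(2)] Bw_def .

lemma sum4: "(\<Sum>r\<in>R. \<Sum>e\<in>E. \<Sum>s\<in>S. \<Sum>f\<in>F. g r e s f) = (\<Sum>e\<in>E. \<Sum>f\<in>F. \<Sum>r\<in>R. \<Sum>s\<in>S. g r e s f)"
proof -
  have "(\<Sum>r\<in>R. \<Sum>e\<in>E. \<Sum>s\<in>S. \<Sum>f\<in>F. g r e s f) = (\<Sum>r\<in>R. \<Sum>e\<in>E. \<Sum>f\<in>F. \<Sum>s\<in>S. g r e s f)"
    by (rule sum.cong[OF refl], rule sum.cong[OF refl], rule sum.swap)
  also have "\<dots> = (\<Sum>e\<in>E. \<Sum>r\<in>R. \<Sum>f\<in>F. \<Sum>s\<in>S. g r e s f)" by (rule sum.swap)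
  also have "\<dots> = (\<Sum>e\<in>E. \<Sum>f\<in>F. \<Sum>r\<in>R. \<Sum>s\<in>S. g r e s f)"
    by (rule sum.cong[OF refl], rule sum.swap)
  finally show ?thesis .
qed

lemma Bw_ii: fixes w :: "nat \<Rightarrow> real" assumes "psd (n*p) X"
  shows "0 \<le> Re (\<Sum>a<p. \<Sum>b<p. of_real (w a * w b) * Bw n p X U a a b b)"
proof -
  have "0 \<le> Re (Qf n p X (\<lambda>r e. of_real (w e) * U r e) (\<lambda>r e. of_real (w e) * U r e))"
    by (rule Qf_psd[OF assms(1)])
  also have "Qf n p X (\<lambda>r e. of_real (w e) * U r e) (\<lambda>r e. of_real (w e) * U r e)
     = (\<Sum>a<p. \<Sum>b<p. of_real (w a * w b) * Bw n p X U a a b b)"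
  proof -
    have "Qf n p X (\<lambda>r e. of_real (w e) * U r e) (\<lambda>r e. of_real (w e) * U r e)
      = (\<Sum>e<p. \<Sum>f<p. \<Sum>r<n. \<Sum>s<n. cnj (of_real (w e) * U r e) * X$$(r*p+e, s*p+f) * (of_real (w f) * U s f))"
      unfolding Qf_def by (rule sum4)
    also have "\<dots> = (\<Sum>a<p. \<Sum>b<p. of_real (w a * w b) * Bw n p X U a a b b)"
      unfolding Bw_def sum_distrib_left by (intro sum.cong refl) (simp add: algebra_simps)
    finally show ?thesis .
  qed
  finally show ?thesis .
qed

lemma Bw_iii: assumes "psd (n*p) X" "a < p" "b < p"
  shows "- (Re (Bw n p X U a b a b) + Re (Bw n p X U b a b a)) \<le> Re (Bw n p X U a b b a) + Re (Bw n p X U b a a b)"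
proof -
  have "0 \<le> Re (Qf n p X (\<lambda>r e. (if e = b then U r a else 0) + (if e = a then U r b else 0))
                     (\<lambda>r e. (if e = b then U r a else 0) + (if e = a then U r b else 0)))"
    by (rule Qf_psd[OF assms(1)])
  also have "Qf n p X (\<lambda>r e. (if e = b then U r a else 0) + (if e = a then U r b else 0))
                     (\<lambda>r e. (if e = b then U r a else 0) + (if e = a then U r b else 0)) = 
     Bw n p X U a b a b + Bw n p X U a b b a + Bw n p X U b a a b + Bw n p X U b a b a"
    unfolding Qf_add Qf_collapse[OF assms(2,3)] Qf_collapse[OF assms(3,2)]
       Qf_collapse[OF assms(2,2)] Qf_collapse[OF assms(3,3)] Bw_def ..
  finally show ?thesis by simp
qed

lemma gamma_idx: assumes A: "A \<in> carrier_mat p p" and ab: "a < p" "b < p"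
  shows "gamma A t B $$ (a,b) = of_real t * (if a = b then ntr p B else 0) + of_real (A$$(a,b)) * B$$(a,b)"
  using A ab unfolding gamma_def delta_map_def schur_map_def by auto

lemma gamma_dim: assumes A: "A \<in> carrier_mat p p"
  shows "dim_row (gamma A t B) = p" "dim_col (gamma A t B) = p"
  using A unfolding gamma_def delta_map_def schur_map_def by auto

lemma gammaT_idx: assumes A: "A \<in> carrier_mat p p" and ab: "a < p" "b < p"
  shows "(gamma A t B)\<^sup>T $$ (a,b) = of_real t * (if a = b then ntr p B else 0) + of_real (A$$(b,a)) * B$$(b,a)"
  using gamma_idx[OF A ab(2,1)] gamma_dim[OF A] ab by auto

lemma blk_idx: fixes r n a p :: nat assumes "r < n" "a < p" shows "r*p+a < n*p" "(r*p+a) div p = r" "(r*p+a) mod p = a"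
proof -
  show "r*p+a < n*p" using assms by (rule blk_lt)
  show "(r*p+a) div p = r" "(r*p+a) mod p = a" using assms by auto
qed

lemma ampl_idx: assumes "r < n" "s < n" "a < p" "b < p"
  shows "ampl n p \<phi> X $$ (r*p+a, s*p+b) = \<phi> (mat p p (\<lambda>(c,d). X $$ (r*p+c, s*p+d))) $$ (a,b)"
  using blk_idx[OF assms(1,3)] blk_idx[OF assms(2,4)] unfolding ampl_def by simp

lemma ntr_blk: "ntr p (mat p p (\<lambda>(c,d). X $$ (r*p+c, s*p+d))) = (\<Sum>c<p. X $$ (r*p+c, s*p+c)) / of_nat p"
  unfolding ntr_def by simp

lemma qf_blocks: assumes "Y \<in> carrier_mat (n*p) (n*p)" "u \<in> carrier_vec (n*p)"
  shows "conjugate u \<bullet> (Y *\<^sub>v u) = (\<Sum>r<n. \<Sum>a<p. \<Sum>s<n. \<Sum>b<p. cnj (u$(r*p+a)) * Y $$ (r*p+a, s*p+b) * u$(s*p+b))"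
  unfolding quad_form[OF assms] sum_blocks
  by (simp add: conj_complex sum_distrib_left mult.assoc)

lemma qf_gen: assumes Y: "Y \<in> carrier_mat (n*p) (n*p)" and u: "u \<in> carrier_vec (n*p)"
  and Yidx: "\<And>r s a b. r < n \<Longrightarrow> s < n \<Longrightarrow> a < p \<Longrightarrow> b < p \<Longrightarrow> Y $$ (r*p+a, s*p+b) =
     of_real t * (if a = b then (\<Sum>c<p. X $$ (r*p+c, s*p+c)) / of_nat p else 0) + of_real (M a b) * X $$ (r*p + f a b, s*p + g a b)"
  defines "U \<equiv> \<lambda>r a. u$(r*p+a)"
  shows "conjugate u \<bullet> (Y *\<^sub>v u) =
     of_real t / of_nat p * (\<Sum>a<p. \<Sum>c<p. Bw n p X U a c a c) + (\<Sum>a<p. \<Sum>b<p. of_real (M a b) * Bw n p X U a (f a b) b (g a b))"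
proof -
  have "conjugate u \<bullet> (Y *\<^sub>v u) = 
     (\<Sum>r<n. \<Sum>a<p. \<Sum>s<n. \<Sum>b<p. cnj (U r a) * (of_real t * (if a = b then (\<Sum>c<p. X $$ (r*p+c, s*p+c)) / of_nat p else 0) + of_real (M a b) * X $$ (r*p + f a b, s*p + g a b)) * U s b)"
    unfolding qf_blocks[OF Y u] U_def
    by (intro sum.cong refl) (simp add: Yidx)
  also have "\<dots> = (\<Sum>a<p. \<Sum>b<p. \<Sum>r<n. \<Sum>s<n. cnj (U r a) * (of_real t * (if a = b then (\<Sum>c<p. X $$ (r*p+c, s*p+c)) / of_nat p else 0) + of_real (M a b) * X $$ (r*p + f a b, s*p + g a b)) * U s b)"
    by (rule sum4)
  also have "\<dots> = (\<Sum>a<p. \<Sum>b<p. (if a = b then of_real t / of_nat p * (\<Sum>c<p. Bw n p X U a c a c) else 0) + of_real (M a b) * Bw n p X U a (f a b) b (g a b))"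
  proof (intro sum.cong refl)
    fix a b
    have "(\<Sum>r<n. \<Sum>s<n. cnj (U r a) * (of_real t * (if a = b then (\<Sum>c<p. X $$ (r*p+c, s*p+c)) / of_nat p else 0) + of_real (M a b) * X $$ (r*p + f a b, s*p + g a b)) * U s b)
      = (\<Sum>r<n. \<Sum>s<n. (if a = b then of_real t / of_nat p * (\<Sum>c<p. cnj (U r a) * X $$ (r*p+c, s*p+c) * U s b) else 0)) + of_real (M a b) * Bw n p X U a (f a b) b (g a b)"
      unfolding Bw_def sum_distrib_left sum.distrib[symmetric]
      by (intro sum.cong refl) (simp add: algebra_simps sum_distrib_left sum_divide_distrib)
    also have "(\<Sum>r<n. \<Sum>s<n. (if a = b then of_real t / of_nat p * (\<Sum>c<p. cnj (U r a) * X $$ (r*p+c, s*p+c) * U s b) else 0))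
       = (if a = b then of_real t / of_nat p * (\<Sum>c<p. Bw n p X U a c a c) else 0)"
    proof (cases "a = b")
      case True
      have swp: "(\<Sum>r<n. \<Sum>s<n. \<Sum>c<p. cnj (U r a) * X $$ (r*p+c, s*p+c) * U s b) = (\<Sum>c<p. \<Sum>r<n. \<Sum>s<n. cnj (U r a) * X $$ (r*p+c, s*p+c) * U s b)"
        by (subst sum.swap, rule sum.cong[OF refl], rule sum.swap)
      have "(\<Sum>r<n. \<Sum>s<n. (if a = b then of_real t / of_nat p * (\<Sum>c<p. cnj (U r a) * X $$ (r*p+c, s*p+c) * U s b) else 0))
         = (\<Sum>r<n. \<Sum>s<n. of_real t / of_nat p * (\<Sum>c<p. cnj (U r a) * X $$ (r*p+c, s*p+c) * U s b))"
        using True by simp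
      also have "\<dots> = of_real t / of_nat p * (\<Sum>r<n. \<Sum>s<n. \<Sum>c<p. cnj (U r a) * X $$ (r*p+c, s*p+c) * U s b)"
        by (simp only: sum_distrib_left)
      also have "\<dots> = of_real t / of_nat p * (\<Sum>c<p. \<Sum>r<n. \<Sum>s<n. cnj (U r a) * X $$ (r*p+c, s*p+c) * U s b)"
        using swp by simp
      also have "\<dots> = (if a = b then of_real t / of_nat p * (\<Sum>c<p. Bw n p X U a c a c) else 0)"
        using True unfolding Bw_def by simp
      finally show ?thesis .
    qed simp
    finally show "(\<Sum>r<n. \<Sum>s<n. cnj (U r a) * (of_real t * (if a = b then (\<Sum>c<p. X $$ (r*p+c, s*p+c)) / of_nat p else 0) + of_real (M a b) * X $$ (r*p + f a b, s*p + g a b)) * U s b)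
      = (if a = b then of_real t / of_nat p * (\<Sum>c<p. Bw n p X U a c a c) else 0) + of_real (M a b) * Bw n p X U a (f a b) b (g a b)" .
  qed
  also have "\<dots> = of_real t / of_nat p * (\<Sum>a<p. \<Sum>c<p. Bw n p X U a c a c) + (\<Sum>a<p. \<Sum>b<p. of_real (M a b) * Bw n p X U a (f a b) b (g a b))"
    by (simp add: sum.distrib sum_distrib_left)
  finally show ?thesis .
qed

lemma qf_gamma: assumes A: "A \<in> carrier_mat p p" and u: "u \<in> carrier_vec (n*p)"
  defines "U \<equiv> \<lambda>r a. u$(r*p+a)"
  shows "conjugate u \<bullet> (ampl n p (gamma A t) X *\<^sub>v u) =
     of_real t / of_nat p * (\<Sum>a<p. \<Sum>c<p. Bw n p X U a c a c) + (\<Sum>a<p. \<Sum>b<p. of_real (A$$(a,b)) * Bw n p X U a a b b)"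
  unfolding U_def
  by (rule qf_gen[where f="\<lambda>a b. a" and g="\<lambda>a b. b", OF _ u]) (simp add: ampl_def, simp add: ampl_idx gamma_idx[OF A] ntr_blk)

lemma qf_gammaT: assumes A: "A \<in> carrier_mat p p" and u: "u \<in> carrier_vec (n*p)"
  defines "U \<equiv> \<lambda>r a. u$(r*p+a)"
  shows "conjugate u \<bullet> (ampl n p (\<lambda>B. (gamma A t B)\<^sup>T) X *\<^sub>v u) =
     of_real t / of_nat p * (\<Sum>a<p. \<Sum>c<p. Bw n p X U a c a c) + (\<Sum>a<p. \<Sum>b<p. of_real (A$$(b,a)) * Bw n p X U a b b a)"
  unfolding U_def
  by (rule qf_gen[where f="\<lambda>a b. b" and g="\<lambda>a b. a", OF _ u]) (simp add: ampl_def, simp add: ampl_idx gammaT_idx[OF A] ntr_blk)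

definition qf :: "nat \<Rightarrow> (nat \<Rightarrow> nat \<Rightarrow> real) \<Rightarrow> (nat \<Rightarrow> real) \<Rightarrow> real" where
  "qf p N x = (\<Sum>i<p. \<Sum>j<p. N i j * x i * x j)"

definition nrm :: "nat \<Rightarrow> (nat \<Rightarrow> real) \<Rightarrow> real" where
  "nrm p x = (\<Sum>i<p. (x i)^2)"

lemma nrm_nonneg: "0 \<le> nrm p x" unfolding nrm_def by (simp add: sum_nonneg)

lemma qf_expand: assumes sym: "\<And>i j. i < p \<Longrightarrow> j < p \<Longrightarrow> N i j = N j i" and k: "k < p"
  shows "qf p N (\<lambda>i. x i + (if i = k then s else 0)) = qf p N x + 2 * s * (\<Sum>j<p. N k j * x j) + s^2 * N k k"
proof -
  have "qf p N (\<lambda>i. x i + (if i = k then s else 0)) =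
     (\<Sum>i<p. \<Sum>j<p. N i j * x i * x j) + (\<Sum>i<p. \<Sum>j<p. (if i = k then N i j * s * x j else 0))
      + (\<Sum>i<p. \<Sum>j<p. (if j = k then N i j * x i * s else 0)) + (\<Sum>i<p. \<Sum>j<p. (if i = k \<and> j = k then N i j * s * s else 0))"
  proof -
    have "qf p N (\<lambda>i. x i + (if i = k then s else 0)) = (\<Sum>i<p. \<Sum>j<p. N i j * x i * x j + (if i = k then N i j * s * x j else 0)
      + (if j = k then N i j * x i * s else 0) + (if i = k \<and> j = k then N i j * s * s else 0))"
      unfolding qf_def by (intro sum.cong refl) (auto simp: algebra_simps)
    thus ?thesis by (simp only: sum.distrib)
  qed
  also have "(\<Sum>i<p. \<Sum>j<p. (if i = k then N i j * s * x j else 0)) = s * (\<Sum>j<p. N k j * x j)"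
    using k by (simp add: sum.delta' sum_distrib_left algebra_simps flip: sum.swap[of _ "{..<p}"]) 
  also have "(\<Sum>i<p. \<Sum>j<p. (if j = k then N i j * x i * s else 0)) = s * (\<Sum>j<p. N k j * x j)"
    using k sym by (simp add: sum.delta' sum_distrib_left algebra_simps)
  also have "(\<Sum>i<p. \<Sum>j<p. (if i = k \<and> j = k then N i j * s * s else 0)) = s^2 * N k k"
  proof -
    have "(\<Sum>i<p. \<Sum>j<p. (if i = k \<and> j = k then N i j * s * s else 0)) = (\<Sum>i<p. (if i = k then N k k * s * s else 0))"
    proof (intro sum.cong refl)
      fix i show "(\<Sum>j<p. (if i = k \<and> j = k then N i j * s * s else 0)) = (if i = k then N k k * s * s else 0)"
        by (cases "i = k") (simp_all add: k)
    qed
    thus ?thesis using k by (simp add: power2_eq_square)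
  qed
  finally show ?thesis unfolding qf_def by simp
qed

lemma times_if01: "(x::real) * (if P then 1 else 0) = (if P then x else 0)" by simp

lemma sum_ind: fixes j p :: nat assumes "j < p" shows "(\<Sum>l<p. (f l::real) * (if l = j then 1 else 0)) = f j"
proof -
  have "(\<Sum>l<p. (f l::real) * (if l = j then 1 else 0)) = (\<Sum>l<p. if l = j then f l else 0)"
    by (intro sum.cong refl) auto
  also have "\<dots> = f j" using assms by (subst sum.delta) auto
  finally show ?thesis .
qed

lemma qf_basis: assumes "j < p" shows "qf p N (\<lambda>i. if i = j then 1 else 0) = N j j"
proof -
  have "qf p N (\<lambda>i. if i = j then 1 else 0) = (\<Sum>i<p. if i = j then N j j else 0)"
    unfolding qf_def
  proof (intro sum.cong refl)
    fix i show "(\<Sum>ja<p. N i ja * (if i = j then 1 else 0) * (if ja = j then 1 else 0)) = (if i = j then N j j else 0)"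
      using sum_ind[OF assms, of "N j"] by (cases "i = j") simp_all
  qed
  thus ?thesis using assms by simp
qed

lemma qf_diff: "qf p (\<lambda>i j. N i j - v i * v j) x = qf p N x - (\<Sum>i<p. v i * x i)^2"
proof -
  have "(\<Sum>i<p. v i * x i)^2 = (\<Sum>i<p. \<Sum>j<p. v i * v j * x i * x j)"
    unfolding power2_eq_square sum_product by (intro sum.cong refl) (simp add: algebra_simps)
  thus ?thesis unfolding qf_def by (simp add: algebra_simps sum_subtractf)
qed

lemma quad_nonneg_lin: fixes a b :: real assumes "\<forall>s. 0 \<le> a + 2 * s * b" shows "b = 0"
proof (rule ccontr)
  assume "b \<noteq> 0"
  have "0 \<le> a + 2 * (- (\<bar>a\<bar> + 1) / (2 * b)) * b" using assms by blast
  also have "a + 2 * (- (\<bar>a\<bar> + 1) / (2 * b)) * b = a - (\<bar>a\<bar> + 1)" using \<open>b \<noteq> 0\<close> by (simp add: field_simps)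
  finally show False by linarith
qed

lemma chol_aux:
  "p - k = d \<Longrightarrow> k \<le> p \<Longrightarrow> (\<forall>i<p. \<forall>j<p. N i j = N j i) \<Longrightarrow> (\<forall>x. 0 \<le> qf p N x) \<Longrightarrow>
   (\<forall>i<p. \<forall>j<p. (i < k \<or> j < k) \<longrightarrow> N i j = 0) \<Longrightarrow>
   \<exists>c. \<forall>i<p. \<forall>j<p. N i j = (\<Sum>l\<in>{k..<p}. c l i * c l j)"
proof (induction d arbitrary: k N)
  case 0
  then have "k = p" by simp
  then show ?case using 0 by auto
next
  case (Suc d)
  have kp: "k < p" using Suc.prems by simp
  have sym: "\<And>i j. i < p \<Longrightarrow> j < p \<Longrightarrow> N i j = N j i" using Suc.prems by blast
  have psd: "\<And>x. 0 \<le> qf p N x" using Suc.prems by blast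
  have supp: "\<And>i j. i < p \<Longrightarrow> j < p \<Longrightarrow> i < k \<or> j < k \<Longrightarrow> N i j = 0" using Suc.prems by blast
  have Nkk: "0 \<le> N k k" using psd[of "\<lambda>i. if i = k then 1 else 0"] qf_basis[OF kp] by simp
  have split: "(\<Sum>l\<in>{k..<p}. f l) = f k + (\<Sum>l\<in>{Suc k..<p}. f l)" for f :: "nat \<Rightarrow> real"
    using kp by (rule sum.atLeast_Suc_lessThan)
  show ?case
  proof (cases "N k k = 0")
    case True
    have row0: "N k j = 0" if j: "j < p" for j
    proof -
      have "0 \<le> N j j + 2 * s * N k j" for s
      proof -
        have "0 \<le> qf p N (\<lambda>i. (if i = j then 1 else 0) + (if i = k then s else 0))" using psd by blast
        also have "\<dots> = qf p N (\<lambda>i. if i = j then 1 else 0) + 2 * s * (\<Sum>l<p. N k l * (if l = j then 1 else 0)) + s^2 * N k k"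
          by (rule qf_expand[OF _ kp]) (rule sym)
        also have "\<dots> = N j j + 2*s*N k j" using qf_basis[OF j, of N] sum_ind[OF j, of "N k"] True by simp
        finally show ?thesis .
      qed
      thus ?thesis using quad_nonneg_lin by blast
    qed
    have "\<exists>c. \<forall>i<p. \<forall>j<p. N i j = (\<Sum>l\<in>{Suc k..<p}. c l i * c l j)"
    proof (rule Suc.IH)
      show "p - Suc k = d" "Suc k \<le> p" using Suc.prems kp by auto
      show "\<forall>i<p. \<forall>j<p. N i j = N j i" "\<forall>x. 0 \<le> qf p N x" using Suc.prems by auto
      show "\<forall>i<p. \<forall>j<p. (i < Suc k \<or> j < Suc k) \<longrightarrow> N i j = 0"
        using supp row0 sym kp by (metis less_Suc_eq)
    qed
    then obtain c where c: "\<forall>i<p. \<forall>j<p. N i j = (\<Sum>l\<in>{Suc k..<p}. c l i * c l j)" by blast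
    show ?thesis
    proof (intro exI[of _ "c(k := \<lambda>_. 0)"] allI impI)
      fix i j assume "i < p" "j < p"
      thus "N i j = (\<Sum>l\<in>{k..<p}. (c(k := \<lambda>_. 0)) l i * (c(k := \<lambda>_. 0)) l j)"
        unfolding split using c by simp
    qed
  next
    case False
    hence Nkk': "0 < N k k" using Nkk by simp
    define v where "v = (\<lambda>i. N i k / sqrt (N k k))"
    have vv: "v i * v j = N i k * N j k / N k k" for i j
      unfolding v_def using Nkk by (simp add: real_sqrt_mult[symmetric] field_simps)
    define N' where "N' = (\<lambda>i j. N i j - v i * v j)"
    have "\<exists>c. \<forall>i<p. \<forall>j<p. N' i j = (\<Sum>l\<in>{Suc k..<p}. c l i * c l j)"
    proof (rule Suc.IH)
      show "p - Suc k = d" "Suc k \<le> p" using Suc.prems kp by auto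
      show "\<forall>i<p. \<forall>j<p. N' i j = N' j i" unfolding N'_def using sym by (simp add: mult.commute)
      show "\<forall>x. 0 \<le> qf p N' x"
      proof
        fix x
        define T where "T = (\<Sum>j<p. N k j * x j)"
        have T': "(\<Sum>i<p. v i * x i) = T / sqrt (N k k)"
          unfolding T_def v_def sum_divide_distrib using sym kp by (intro sum.cong refl) simp
        have "qf p N' x = qf p N x - T^2 / N k k"
          unfolding N'_def qf_diff T' using Nkk by (simp add: power_divide)
        also have "\<dots> = qf p N (\<lambda>i. x i + (if i = k then - T / N k k else 0))"
        proof -
          have "qf p N (\<lambda>i. x i + (if i = k then - T / N k k else 0)) = qf p N x + 2 * (- T / N k k) * (\<Sum>j<p. N k j * x j) + (- T / N k k)^2 * N k k"
            by (rule qf_expand[OF _ kp]) (rule sym)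
          thus ?thesis unfolding T_def[symmetric] using Nkk' by (simp add: field_simps power2_eq_square)
        qed
        finally show "0 \<le> qf p N' x" using psd by simp
      qed
      show "\<forall>i<p. \<forall>j<p. (i < Suc k \<or> j < Suc k) \<longrightarrow> N' i j = 0"
      proof (intro allI impI)
        fix i j assume ij: "i < p" "j < p" "i < Suc k \<or> j < Suc k"
        show "N' i j = 0"
        proof (cases "i < k \<or> j < k")
          case True
          hence "N i j = 0" "N i k = 0 \<or> N j k = 0" using supp ij kp by auto
          thus ?thesis unfolding N'_def vv by auto
        next
          case False
          hence "i = k \<or> j = k" using ij by auto
          thus ?thesis unfolding N'_def vv using Nkk' sym ij kp by auto
        qed
      qed
    qed
    then obtain c where c: "\<forall>i<p. \<forall>j<p. N' i j = (\<Sum>l\<in>{Suc k..<p}. c l i * c l j)" by blast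
    show ?thesis
    proof (intro exI[of _ "c(k := v)"] allI impI)
      fix i j assume ij: "i < p" "j < p"
      have "N i j = N' i j + v i * v j" unfolding N'_def by simp
      thus "N i j = (\<Sum>l\<in>{k..<p}. (c(k := v)) l i * (c(k := v)) l j)"
        unfolding split using c ij by simp
    qed
  qed
qed

lemma cholesky: assumes "\<forall>i<p. \<forall>j<p. N i j = N j i" "\<forall>x. 0 \<le> qf p N x"
  shows "\<exists>c. \<forall>i<p. \<forall>j<p. N i j = (\<Sum>l<p. c l i * c l j)"
  using chol_aux[OF refl, of 0 p N] assms by (simp add: atLeast0LessThan)

lemma nrm_qf: "nrm p x = qf p (\<lambda>i j. if i = j then 1 else 0) x"
proof -
  have "qf p (\<lambda>i j. if i = j then 1 else 0) x = (\<Sum>i<p. x i * x i)"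
    unfolding qf_def
  proof (intro sum.cong refl)
    fix i assume "i \<in> {..<p}"
    have "(\<Sum>j<p. (if i = j then 1 else 0) * x i * x j) = (\<Sum>j<p. if i = j then x i * x j else 0)"
      by (intro sum.cong refl) auto
    thus "(\<Sum>j<p. (if i = j then 1 else 0) * x i * x j) = x i * x i" using \<open>i \<in> {..<p}\<close> by simp
  qed
  thus ?thesis unfolding nrm_def by (simp add: power2_eq_square)
qed

lemma sum_ind2: fixes k p :: nat assumes "k < p" shows "(\<Sum>j<p. (if k = j then 1 else 0) * f j) = (f k::real)"
proof -
  have "(\<Sum>j<p. (if k = j then 1 else 0) * f j) = (\<Sum>j<p. if k = j then f j else 0)"
    by (intro sum.cong refl) auto
  also have "\<dots> = f k" using assms by (subst sum.delta') auto
  finally show ?thesis .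
qed

lemma quad_nonneg_lin2: fixes b d :: real assumes "\<forall>s. 0 \<le> 2 * s * b + s^2 * d" shows "b = 0"
proof (rule ccontr)
  assume b: "b \<noteq> 0"
  define e where "e = 1 / (\<bar>d\<bar> + 1)"
  have e0: "0 < e" unfolding e_def by simp
  have ed: "e * \<bar>d\<bar> \<le> 1" unfolding e_def by (simp add: field_simps)
  have bb: "0 < b^2" using b by simp
  have "(-(e*b))^2 * d \<le> (e*b)^2 * \<bar>d\<bar>" by (simp add: mult_left_mono)
  also have "\<dots> = e * b^2 * (e * \<bar>d\<bar>)" by (simp add: power2_eq_square)
  also have "\<dots> \<le> e * b^2" using ed e0 bb by (simp add: mult_left_le)
  finally have "2 * (-(e*b)) * b + (-(e*b))^2 * d \<le> - e * b^2" by (simp add: power2_eq_square algebra_simps)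
  also have "\<dots> < 0" using e0 bb by simp
  finally show False using assms by (meson not_le)
qed

lemma qf_scale: "qf p N (\<lambda>i. if i < p then c * x i else 0) = c^2 * qf p N x"
  unfolding qf_def sum_distrib_left by (intro sum.cong refl) (auto simp: power2_eq_square algebra_simps)

lemma nrm_scale: "nrm p (\<lambda>i. if i < p then c * x i else 0) = c^2 * nrm p x"
  unfolding nrm_def sum_distrib_left by (intro sum.cong refl) (auto simp: power2_eq_square algebra_simps)

lemma nrm_zero: "nrm p x = 0 \<Longrightarrow> i < p \<Longrightarrow> x i = 0"
  unfolding nrm_def by (subst (asm) sum_nonneg_eq_0_iff) auto

lemma qf_zero: "(\<And>i. i < p \<Longrightarrow> x i = 0) \<Longrightarrow> qf p N x = 0"
  unfolding qf_def by simp

lemma min_exists: fixes N :: "nat \<Rightarrow> nat \<Rightarrow> real" assumes p: "0 < p"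
  shows "\<exists>x0. nrm p x0 = 1 \<and> (\<forall>x. qf p N x0 * nrm p x \<le> qf p N x)"
proof -
  define Kf where "Kf = (\<lambda>i::nat. if i < p then {-1..1::real} else {0})"
  define K where "K = Pi UNIV Kf \<inter> {x. nrm p x = 1}"
  have cK: "compact K"
  proof -
    have "compactin (product_topology (\<lambda>i. euclidean) UNIV) (PiE UNIV Kf)"
      unfolding compactin_PiE Kf_def by auto
    hence "compact (Pi UNIV Kf)" unfolding euclidean_product_topology PiE_UNIV_domain by simp
    moreover have "closed {x. nrm p x = 1}"
      unfolding nrm_def by (intro closed_Collect_eq continuous_intros continuous_on_product_coordinates)
    ultimately show ?thesis unfolding K_def by blast
  qed
  have e0: "(\<lambda>i. if i = 0 then 1 else 0) \<in> K"
  proof -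
    have "(\<Sum>i<p. (if i = 0 then 1 else 0::real)^2) = (\<Sum>i<p. if i = 0 then 1 else 0)"
      by (intro sum.cong) auto
    thus ?thesis unfolding K_def Kf_def nrm_def using p by auto
  qed
  have cont: "continuous_on K (qf p N)"
    unfolding qf_def by (intro continuous_intros continuous_on_subset[OF continuous_on_product_coordinates] subset_UNIV)
  obtain x0 where x0: "x0 \<in> K" and min: "\<And>y. y \<in> K \<Longrightarrow> qf p N x0 \<le> qf p N y"
    using continuous_attains_inf[OF cK _ cont] e0 by blast
  have n0: "nrm p x0 = 1" using x0 unfolding K_def by simp
  show ?thesis
  proof (intro exI[of _ x0] conjI allI n0)
    fix x
    show "qf p N x0 * nrm p x \<le> qf p N x"
    proof (cases "nrm p x = 0")
      case True
      then show ?thesis using nrm_zero qf_zero by (metis mult_zero_right order_refl)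
    next
      case False
      hence pos: "0 < nrm p x" using nrm_nonneg[of p x] by simp
      define c where "c = 1 / sqrt (nrm p x)"
      define y where "y = (\<lambda>i. if i < p then c * x i else 0)"
      have c2: "c^2 = 1 / nrm p x" unfolding c_def using pos by (simp add: power_divide)
      have ny: "nrm p y = 1" unfolding y_def nrm_scale c2 using pos by simp
      have "y \<in> K" unfolding K_def
      proof (intro IntI CollectI ny Pi_I)
        fix i show "y i \<in> Kf i"
        proof (cases "i < p")
          case True
          have "(y i)^2 \<le> nrm p y" unfolding nrm_def using True
            by (intro member_le_sum) auto
          hence "\<bar>y i\<bar> \<le> 1" using ny by (simp add: abs_square_le_1)
          thus ?thesis unfolding Kf_def using True by auto
        qed (simp add: y_def Kf_def)
      qed
      hence "qf p N x0 \<le> qf p N y" by (rule min)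
      also have "qf p N y = qf p N x / nrm p x" unfolding y_def qf_scale c2 by simp
      finally show ?thesis using pos by (simp add: field_simps)
    qed
  qed
qed

lemma min_eigen: fixes N :: "nat \<Rightarrow> nat \<Rightarrow> real"
  assumes sym: "\<And>i j. i < p \<Longrightarrow> j < p \<Longrightarrow> N i j = N j i"
    and n0: "nrm p x0 = 1" and min: "\<forall>x. qf p N x0 * nrm p x \<le> qf p N x" and k: "k < p"
  shows "(\<Sum>j<p. N k j * x0 j) = qf p N x0 * x0 k"
proof -
  define m where "m = qf p N x0"
  have "0 \<le> 2 * s * ((\<Sum>j<p. N k j * x0 j) - m * x0 k) + s^2 * (N k k - m)" for s
  proof -
    have "m * nrm p (\<lambda>i. x0 i + (if i = k then s else 0)) \<le> qf p N (\<lambda>i. x0 i + (if i = k then s else 0))"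
      using min unfolding m_def by blast
    moreover have "qf p N (\<lambda>i. x0 i + (if i = k then s else 0)) = m + 2 * s * (\<Sum>j<p. N k j * x0 j) + s^2 * N k k"
      unfolding m_def by (rule qf_expand[OF _ k]) (rule sym)
    moreover have "nrm p (\<lambda>i. x0 i + (if i = k then s else 0)) = 1 + 2 * s * x0 k + s^2"
    proof -
      have "nrm p (\<lambda>i. x0 i + (if i = k then s else 0)) = nrm p x0 + 2 * s * (\<Sum>j<p. (if k = j then 1 else 0) * x0 j) + s^2 * (if k = k then 1 else 0)"
        unfolding nrm_qf by (rule qf_expand[OF _ k]) auto
      thus ?thesis using n0 k sum_ind2[OF k, of x0] by simp
    qed
    ultimately show ?thesis by (simp add: algebra_simps)
  qed
  hence "(\<Sum>j<p. N k j * x0 j) - m * x0 k = 0" using quad_nonneg_lin2 by blast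
  thus ?thesis unfolding m_def by simp
qed

lemma adj_carrier: "adjacency_matrix p A \<Longrightarrow> A \<in> carrier_mat p p"
  unfolding adjacency_matrix_def by blast

lemma adj_sym: assumes "adjacency_matrix p A" "i < p" "j < p" shows "A$$(i,j) = A$$(j,i)"
proof -
  have A: "A \<in> carrier_mat p p" and T: "A\<^sup>T = A" using assms(1) unfolding adjacency_matrix_def by auto
  have "A$$(i,j) = A\<^sup>T $$ (i,j)" using T by simp
  also have "\<dots> = A$$(j,i)" using A assms by simp
  finally show ?thesis .
qed

lemma mult_vec_sum: assumes "A \<in> carrier_mat p p" "k < p"
  shows "(A *\<^sub>v vec p x) $ k = (\<Sum>j<p. A$$(k,j) * x j)"
  using assms by (auto simp: scalar_prod_def lessThan_atLeast0 intro!: sum.cong)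

lemma lambda_min_prop: assumes adj: "adjacency_matrix p A" and p: "0 < p"
  shows "\<exists>x0. nrm p x0 = 1 \<and> (\<forall>k<p. (\<Sum>j<p. A$$(k,j) * x0 j) = lambda_min A * x0 k)
      \<and> qf p (\<lambda>i j. A$$(i,j)) x0 = lambda_min A \<and> (\<forall>x. lambda_min A * nrm p x \<le> qf p (\<lambda>i j. A$$(i,j)) x)"
proof -
  let ?N = "\<lambda>i j. A$$(i,j)"
  have A: "A \<in> carrier_mat p p" using adj by (rule adj_carrier)
  have sym: "\<And>i j. i < p \<Longrightarrow> j < p \<Longrightarrow> ?N i j = ?N j i" using adj_sym[OF adj] by blast
  obtain x0 where n0: "nrm p x0 = 1" and min: "\<forall>x. qf p ?N x0 * nrm p x \<le> qf p ?N x"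
    using min_exists[OF p] by blast
  define m where "m = qf p ?N x0"
  have ev: "\<And>k. k < p \<Longrightarrow> (\<Sum>j<p. A$$(k,j) * x0 j) = m * x0 k"
    unfolding m_def using min_eigen[OF sym n0 min] by blast
  define E where "E = {k. eigenvalue A k}"
  have finE: "finite E"
  proof -
    have "char_poly A \<noteq> 0" using degree_monic_char_poly[OF A] by auto
    hence "finite {k. poly (char_poly A) k = 0}" by (rule poly_roots_finite)
    thus ?thesis unfolding E_def eigenvalue_root_char_poly[OF A] .
  qed
  have mE: "m \<in> E"
  proof -
    have "eigenvector A (vec p x0) m" unfolding eigenvector_def
    proof (intro conjI)
      show "vec p x0 \<in> carrier_vec (dim_row A)" using A by simp
      show "vec p x0 \<noteq> 0\<^sub>v (dim_row A)"
      proof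
        assume "vec p x0 = 0\<^sub>v (dim_row A)"
        hence eq: "vec p x0 = 0\<^sub>v p" using A by simp
        have "x0 i = 0" if i: "i < p" for i
        proof -
          have "(vec p x0) $ i = (0\<^sub>v p) $ i" using eq by simp
          thus ?thesis using i by simp
        qed
        hence "nrm p x0 = 0" unfolding nrm_def by simp
        thus False using n0 by simp
      qed
      show "A *\<^sub>v vec p x0 = m \<cdot>\<^sub>v vec p x0"
      proof (rule eq_vecI)
        fix i assume "i < dim_vec (m \<cdot>\<^sub>v vec p x0)"
        hence i: "i < p" by simp
        show "(A *\<^sub>v vec p x0) $ i = (m \<cdot>\<^sub>v vec p x0) $ i"
          unfolding mult_vec_sum[OF A i] ev[OF i] using i by simp
      qed (use A in simp)
    qed
    thus ?thesis unfolding E_def eigenvalue_def by blast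
  qed
  have mle: "m \<le> k" if kE: "k \<in> E" for k
  proof -
    obtain w where w: "eigenvector A w k" using kE unfolding E_def eigenvalue_def by blast
    hence wc: "w \<in> carrier_vec p" and w0: "w \<noteq> 0\<^sub>v p" and Aw: "A *\<^sub>v w = k \<cdot>\<^sub>v w"
      unfolding eigenvector_def using A by auto
    define y where "y = (\<lambda>i. w $ i)"
    have wy: "w = vec p y" using wc unfolding y_def by auto
    have pos: "0 < nrm p y"
    proof (rule ccontr)
      assume "\<not> 0 < nrm p y"
      hence "nrm p y = 0" using nrm_nonneg[of p y] by simp
      hence "\<And>i. i < p \<Longrightarrow> y i = 0" using nrm_zero by blast
      hence "w = 0\<^sub>v p" unfolding wy by auto
      thus False using w0 by simp
    qed
    have Ay: "\<And>i. i < p \<Longrightarrow> (\<Sum>j<p. A$$(i,j) * y j) = k * y i"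
    proof -
      fix i assume i: "i < p"
      have "(A *\<^sub>v w) $ i = (k \<cdot>\<^sub>v w) $ i" using Aw by simp
      thus "(\<Sum>j<p. A$$(i,j) * y j) = k * y i" using mult_vec_sum[OF A i, of y] i wc unfolding wy by simp
    qed
    have "qf p ?N y = (\<Sum>i<p. y i * (\<Sum>j<p. A$$(i,j) * y j))"
      unfolding qf_def sum_distrib_left by (intro sum.cong refl) (simp add: algebra_simps)
    also have "\<dots> = (\<Sum>i<p. y i * (k * y i))" using Ay by (intro sum.cong refl) simp
    also have "\<dots> = k * nrm p y" unfolding nrm_def sum_distrib_left
      by (intro sum.cong refl) (simp add: power2_eq_square algebra_simps)
    finally have "m * nrm p y \<le> k * nrm p y" using min unfolding m_def by metis
    thus ?thesis using pos by simp
  qed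
  have lm: "lambda_min A = m" unfolding lambda_min_def E_def[symmetric]
    by (rule Min_eqI[OF finE mle mE])
  show ?thesis
    by (intro exI[of _ x0] conjI allI impI n0) (use ev min lm m_def in \<open>auto simp: mult.commute\<close>)
qed

lemma lambda_min_le: assumes adj: "adjacency_matrix p A" and nz: "A \<noteq> 0\<^sub>m p p"
    and R: "\<forall>x. lambda_min A * nrm p x \<le> qf p (\<lambda>i j. A$$(i,j)) x"
  shows "lambda_min A \<le> -1"
proof -
  have A: "A \<in> carrier_mat p p" using adj by (rule adj_carrier)
  obtain i j where ij: "i < p" "j < p" "A$$(i,j) \<noteq> 0"
  proof (rule ccontr)
    assume "\<not> thesis"
    hence "\<And>i j. i < p \<Longrightarrow> j < p \<Longrightarrow> A$$(i,j) = 0" using that by blast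
    hence "A = 0\<^sub>m p p" using A by (intro eq_matI) auto
    thus False using nz by simp
  qed
  have a1: "A$$(i,j) = 1" using ij adj unfolding adjacency_matrix_def by auto
  have neq: "i \<noteq> j" using ij adj unfolding adjacency_matrix_def by auto
  have aii: "A$$(i,i) = 0" "A$$(j,j) = 0" using ij adj unfolding adjacency_matrix_def by auto
  have aji: "A$$(j,i) = 1" using adj_sym[OF adj ij(1,2)] a1 by simp
  have sym: "\<And>a b. a < p \<Longrightarrow> b < p \<Longrightarrow> A$$(a,b) = A$$(b,a)" using adj_sym[OF adj] by blast
  define x where "x = (\<lambda>l. (if l = i then 1 else 0) + (if l = j then -1 else (0::real)))"
  have "qf p (\<lambda>a b. A$$(a,b)) x = qf p (\<lambda>a b. A$$(a,b)) (\<lambda>l. if l = i then 1 else 0) + 2 * (-1) * (\<Sum>l<p. A$$(j,l) * (if l = i then 1 else 0)) + (-1)^2 * A$$(j,j)"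
    unfolding x_def by (rule qf_expand[OF _ ij(2)]) (rule sym)
  also have "\<dots> = -2" using qf_basis[OF ij(1), of "\<lambda>a b. A$$(a,b)"] sum_ind[OF ij(1), of "\<lambda>l. A$$(j,l)"] aii aji by simp
  finally have q: "qf p (\<lambda>a b. A$$(a,b)) x = -2" .
  have "nrm p x = qf p (\<lambda>a b. if a = b then 1 else 0) (\<lambda>l. if l = i then 1 else 0) + 2 * (-1) * (\<Sum>l<p. (if j = l then 1 else 0) * (if l = i then 1 else 0)) + (-1)^2 * (if j = j then 1 else 0)"
    unfolding x_def nrm_qf by (rule qf_expand[OF _ ij(2)]) auto
  also have "\<dots> = 2" using qf_basis[OF ij(1), of "\<lambda>a b. if a = b then 1 else (0::real)"] sum_ind[OF ij(1), of "\<lambda>l. if j = l then 1 else 0"] neq by simp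
  finally have n: "nrm p x = 2" .
  show ?thesis using R[rule_format, of x] q n by simp
qed

lemma adj_herm_idx: assumes "mat_adjoint Y = Y" "Y \<in> carrier_mat m m" "i < m" "j < m"
  shows "Y $$ (i,j) = cnj (Y $$ (j,i))"
proof -
  have "Y $$ (i,j) = mat_adjoint Y $$ (i,j)" using assms by simp
  also have "\<dots> = conjugate (Y $$ (j,i))" using assms by (subst adj_idx) auto
  finally show ?thesis by (simp add: conj_complex)
qed

lemma herm_Im: assumes Y: "Y \<in> carrier_mat m m" and h: "mat_adjoint Y = Y" and v: "v \<in> carrier_vec m"
  shows "Im (conjugate v \<bullet> (Y *\<^sub>v v)) = 0"
proof -
  define z where "z = conjugate v \<bullet> (Y *\<^sub>v v)"
  have z: "z = (\<Sum>i<m. \<Sum>j<m. cnj (v$i) * Y$$(i,j) * v$j)"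
    unfolding z_def quad_form[OF Y v] by (simp add: conj_complex sum_distrib_left mult.assoc)
  have "cnj z = (\<Sum>i<m. \<Sum>j<m. v$i * cnj (Y$$(i,j)) * cnj (v$j))" unfolding z by simp
  also have "\<dots> = (\<Sum>i<m. \<Sum>j<m. cnj (v$j) * Y$$(j,i) * v$i)"
  proof (intro sum.cong refl)
    fix i j assume ij: "i \<in> {..<m}" "j \<in> {..<m}"
    have "Y$$(j,i) = cnj (Y$$(i,j))" by (rule adj_herm_idx[OF h Y]) (use ij in auto)
    thus "v$i * cnj (Y$$(i,j)) * cnj (v$j) = cnj (v$j) * Y$$(j,i) * v$i" by simp
  qed
  also have "\<dots> = z" unfolding z by (rule sum.swap)
  finally have "cnj z = z" .
  from arg_cong[OF this, of Im] have "- Im z = Im z" by simp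
  thus ?thesis unfolding z_def by simp
qed

lemma herm_of_blocks: assumes Y: "Y \<in> carrier_mat (n*p) (n*p)"
  and h: "\<And>r s a b. r < n \<Longrightarrow> s < n \<Longrightarrow> a < p \<Longrightarrow> b < p \<Longrightarrow> Y $$ (s*p+b, r*p+a) = cnj (Y $$ (r*p+a, s*p+b))"
  shows "mat_adjoint Y = Y"
proof (rule eq_matI)
  show "dim_row (mat_adjoint Y) = dim_row Y" "dim_col (mat_adjoint Y) = dim_col Y" using Y by (auto simp: adj_dim)
  fix i j assume "i < dim_row Y" "j < dim_col Y"
  hence i: "i < n*p" and j: "j < n*p" using Y by auto
  hence p: "0 < p" by (cases p) auto
  have di: "i = (i div p)*p + i mod p" "i div p < n" "i mod p < p"
    using i p by (auto simp: less_mult_imp_div_less)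
  have dj: "j = (j div p)*p + j mod p" "j div p < n" "j mod p < p"
    using j p by (auto simp: less_mult_imp_div_less)
  have "Y $$ (i,j) = cnj (Y $$ (j,i))"
    using h[OF dj(2) di(2) dj(3) di(3)] di(1) dj(1) by simp
  thus "mat_adjoint Y $$ (i,j) = Y $$ (i,j)" using i j Y by (simp add: adj_idx conj_complex)
qed

lemma ampl_gamma_herm: assumes A: "adjacency_matrix p A" and X: "psd (n*p) X"
  shows "mat_adjoint (ampl n p (gamma A t) X) = ampl n p (gamma A t) X"
proof (rule herm_of_blocks)
  show "ampl n p (gamma A t) X \<in> carrier_mat (n*p) (n*p)" unfolding ampl_def by simp
  fix r s a b assume rs: "r < n" "s < n" "a < p" "b < p"
  have Ac: "A \<in> carrier_mat p p" using A by (rule adj_carrier)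
  have hX: "\<And>i j. i < n*p \<Longrightarrow> j < n*p \<Longrightarrow> X $$ (j,i) = cnj (X $$ (i,j))" using psd_herm[OF X] by blast
  have h1: "X $$ (s*p+c, r*p+c) = cnj (X $$ (r*p+c, s*p+c))" if "c < p" for c
    using hX[OF blk_lt[OF rs(1) that] blk_lt[OF rs(2) that]] .
  have h2: "X $$ (s*p+b, r*p+a) = cnj (X $$ (r*p+a, s*p+b))"
    using hX[OF blk_lt[OF rs(1) rs(3)] blk_lt[OF rs(2) rs(4)]] .
  show "ampl n p (gamma A t) X $$ (s*p+b, r*p+a) = cnj (ampl n p (gamma A t) X $$ (r*p+a, s*p+b))"
    using rs h1 h2 adj_sym[OF A rs(3) rs(4)]
    by (simp add: ampl_idx gamma_idx[OF Ac] ntr_blk)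
qed

lemma ampl_gammaT_herm: assumes A: "adjacency_matrix p A" and X: "psd (n*p) X"
  shows "mat_adjoint (ampl n p (\<lambda>B. (gamma A t B)\<^sup>T) X) = ampl n p (\<lambda>B. (gamma A t B)\<^sup>T) X"
proof (rule herm_of_blocks)
  show "ampl n p (\<lambda>B. (gamma A t B)\<^sup>T) X \<in> carrier_mat (n*p) (n*p)" unfolding ampl_def by simp
  fix r s a b assume rs: "r < n" "s < n" "a < p" "b < p"
  have Ac: "A \<in> carrier_mat p p" using A by (rule adj_carrier)
  have hX: "\<And>i j. i < n*p \<Longrightarrow> j < n*p \<Longrightarrow> X $$ (j,i) = cnj (X $$ (i,j))" using psd_herm[OF X] by blast
  have h1: "X $$ (s*p+c, r*p+c) = cnj (X $$ (r*p+c, s*p+c))" if "c < p" for c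
    using hX[OF blk_lt[OF rs(1) that] blk_lt[OF rs(2) that]] .
  have h2: "X $$ (s*p+a, r*p+b) = cnj (X $$ (r*p+b, s*p+a))"
    using hX[OF blk_lt[OF rs(1) rs(4)] blk_lt[OF rs(2) rs(3)]] .
  show "ampl n p (\<lambda>B. (gamma A t B)\<^sup>T) X $$ (s*p+b, r*p+a) = cnj (ampl n p (\<lambda>B. (gamma A t B)\<^sup>T) X $$ (r*p+a, s*p+b))"
    using rs h1 h2 adj_sym[OF A rs(3) rs(4)]
    by (simp add: ampl_idx gammaT_idx[OF Ac] ntr_blk)
qed

lemma Re_scale: "Re (of_real t / of_nat p * z) = t / real p * Re z"
proof -
  have "of_real t / of_nat p = complex_of_real (t / real p)" by simp
  thus ?thesis by simp
qed

lemma chol_split: fixes R :: "nat \<Rightarrow> nat \<Rightarrow> real"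
  assumes c: "\<forall>i<p. \<forall>j<p. M i j - (if i = j then lam else 0) = (\<Sum>l<p. c l i * c l j)"
  shows "(\<Sum>a<p. \<Sum>b<p. M a b * R a b) = (\<Sum>l<p. \<Sum>a<p. \<Sum>b<p. c l a * c l b * R a b) + lam * (\<Sum>a<p. R a a)"
proof -
  have "(\<Sum>a<p. \<Sum>b<p. M a b * R a b) = (\<Sum>a<p. \<Sum>b<p. (\<Sum>l<p. c l a * c l b * R a b) + (if a = b then lam * R a a else 0))"
  proof (intro sum.cong refl)
    fix a b assume ab: "a \<in> {..<p}" "b \<in> {..<p}"
    have "M a b = (\<Sum>l<p. c l a * c l b) + (if a = b then lam else 0)" using c ab by force
    thus "M a b * R a b = (\<Sum>l<p. c l a * c l b * R a b) + (if a = b then lam * R a a else 0)"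
      by (simp add: sum_distrib_right distrib_right)
  qed
  also have "\<dots> = (\<Sum>a<p. \<Sum>b<p. \<Sum>l<p. c l a * c l b * R a b) + (\<Sum>a<p. lam * R a a)"
    by (simp add: sum.distrib)
  also have "(\<Sum>a<p. \<Sum>b<p. \<Sum>l<p. c l a * c l b * R a b) = (\<Sum>l<p. \<Sum>a<p. \<Sum>b<p. c l a * c l b * R a b)"
    by (subst sum.swap, rule sum.cong[OF refl], rule sum.swap)
  finally show ?thesis by (simp add: sum_distrib_left)
qed

lemma qf_sub_diag: "qf p (\<lambda>i j. M i j - (if i = j then lam else 0)) x = qf p M x - lam * nrm p x"
proof -
  have "qf p (\<lambda>i j. M i j - (if i = j then lam else 0)) x = qf p M x - lam * qf p (\<lambda>i j. if i = j then 1 else 0) x"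
  proof -
    have "qf p (\<lambda>i j. M i j - (if i = j then lam else 0)) x = (\<Sum>i<p. \<Sum>j<p. M i j * x i * x j - lam * ((if i = j then 1 else 0) * x i * x j))"
      unfolding qf_def by (intro sum.cong refl) (auto simp: algebra_simps)
    thus ?thesis unfolding qf_def by (simp only: sum_subtractf sum_distrib_left)
  qed
  thus ?thesis unfolding nrm_qf .
qed

lemma cp_suff: assumes A: "adjacency_matrix p A"
  and R: "\<forall>x. lam * nrm p x \<le> qf p (\<lambda>i j. A$$(i,j)) x"
  and t0: "0 \<le> t" and tl: "0 \<le> t / real p + lam"
  and X: "psd (n*p) X"
  shows "psd (n*p) (ampl n p (gamma A t) X)"
proof -
  have Ac: "A \<in> carrier_mat p p" using A by (rule adj_carrier)
  let ?Y = "ampl n p (gamma A t) X"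
  have Y: "?Y \<in> carrier_mat (n*p) (n*p)" unfolding ampl_def by simp
  have h: "mat_adjoint ?Y = ?Y" by (rule ampl_gamma_herm[OF A X])
  define N where "N = (\<lambda>i j. A$$(i,j) - (if i = j then lam else 0))"
  obtain c where c: "\<forall>i<p. \<forall>j<p. N i j = (\<Sum>l<p. c l i * c l j)"
  proof -
    have "\<exists>c. \<forall>i<p. \<forall>j<p. N i j = (\<Sum>l<p. c l i * c l j)"
    proof (rule cholesky)
      show "\<forall>i<p. \<forall>j<p. N i j = N j i" unfolding N_def using adj_sym[OF A] by auto
      show "\<forall>x. 0 \<le> qf p N x" unfolding N_def qf_sub_diag using R by (auto simp: algebra_simps)
    qed
    thus ?thesis using that by blast
  qed
  have "Im (conjugate v \<bullet> (?Y *\<^sub>v v)) = 0 \<and> 0 \<le> Re (conjugate v \<bullet> (?Y *\<^sub>v v))" if v: "v \<in> carrier_vec (n*p)" for v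
  proof
    show "Im (conjugate v \<bullet> (?Y *\<^sub>v v)) = 0" by (rule herm_Im[OF Y h v])
    define U where "U = (\<lambda>r a. v$(r*p+a))"
    define Q where "Q = (\<lambda>a c. Re (Bw n p X U a c a c))"
    have Q0: "\<And>a c. c < p \<Longrightarrow> 0 \<le> Q a c" unfolding Q_def by (rule Bw_i[OF X])
    have "Re (\<Sum>a<p. \<Sum>b<p. of_real (A$$(a,b)) * Bw n p X U a a b b) = (\<Sum>a<p. \<Sum>b<p. A$$(a,b) * Re (Bw n p X U a a b b))"
      by (simp add: Re_sum)
    also have "\<dots> = (\<Sum>l<p. \<Sum>a<p. \<Sum>b<p. c l a * c l b * Re (Bw n p X U a a b b)) + lam * (\<Sum>a<p. Q a a)"
      unfolding Q_def by (rule chol_split) (use c in \<open>simp add: N_def\<close>)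
    also have "\<dots> \<ge> lam * (\<Sum>a<p. Q a a)"
    proof -
      have "0 \<le> (\<Sum>a<p. \<Sum>b<p. c l a * c l b * Re (Bw n p X U a a b b))" for l
        using Bw_ii[OF X, of "c l" U] by (simp add: Re_sum)
      hence "0 \<le> (\<Sum>l<p. \<Sum>a<p. \<Sum>b<p. c l a * c l b * Re (Bw n p X U a a b b))" by (simp add: sum_nonneg)
      thus ?thesis by simp
    qed
    finally have S2: "lam * (\<Sum>a<p. Q a a) \<le> Re (\<Sum>a<p. \<Sum>b<p. of_real (A$$(a,b)) * Bw n p X U a a b b)" .
    have S1: "(\<Sum>a<p. Q a a) \<le> Re (\<Sum>a<p. \<Sum>c<p. Bw n p X U a c a c)"
    proof -
      have "(\<Sum>a<p. Q a a) \<le> (\<Sum>a<p. \<Sum>c<p. Q a c)"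
        by (intro sum_mono member_le_sum) (auto intro: Q0)
      thus ?thesis unfolding Q_def by (simp add: Re_sum)
    qed
    have Qn: "0 \<le> (\<Sum>a<p. Q a a)" by (intro sum_nonneg) (auto intro: Q0)
    have "Re (conjugate v \<bullet> (?Y *\<^sub>v v)) = t / real p * Re (\<Sum>a<p. \<Sum>c<p. Bw n p X U a c a c) + Re (\<Sum>a<p. \<Sum>b<p. of_real (A$$(a,b)) * Bw n p X U a a b b)"
      unfolding qf_gamma[OF Ac v] U_def by (simp only: Re_scale plus_complex.sel)
    also have "\<dots> \<ge> t / real p * (\<Sum>a<p. Q a a) + lam * (\<Sum>a<p. Q a a)"
      using S1 S2 t0 by (intro add_mono mult_left_mono) auto
    finally show "0 \<le> Re (conjugate v \<bullet> (?Y *\<^sub>v v))"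
      using tl Qn by (smt (verit) distrib_right mult_nonneg_nonneg)
  qed
  thus ?thesis unfolding psd_def using Y h by blast
qed

lemma ppt_suff: assumes A: "adjacency_matrix p A"
  and t1: "1 \<le> t / real p"
  and X: "psd (n*p) X"
  shows "psd (n*p) (ampl n p (\<lambda>B. (gamma A t B)\<^sup>T) X)"
proof -
  have Ac: "A \<in> carrier_mat p p" using A by (rule adj_carrier)
  let ?Y = "ampl n p (\<lambda>B. (gamma A t B)\<^sup>T) X"
  have Y: "?Y \<in> carrier_mat (n*p) (n*p)" unfolding ampl_def by simp
  have h: "mat_adjoint ?Y = ?Y" by (rule ampl_gammaT_herm[OF A X])
  have "Im (conjugate v \<bullet> (?Y *\<^sub>v v)) = 0 \<and> 0 \<le> Re (conjugate v \<bullet> (?Y *\<^sub>v v))" if v: "v \<in> carrier_vec (n*p)" for v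
  proof
    show "Im (conjugate v \<bullet> (?Y *\<^sub>v v)) = 0" by (rule herm_Im[OF Y h v])
    define U where "U = (\<lambda>r a. v$(r*p+a))"
    define Q where "Q = (\<lambda>a c. Re (Bw n p X U a c a c))"
    define R where "R = (\<lambda>a b. Re (Bw n p X U a b b a))"
    have Q0: "\<And>a c. c < p \<Longrightarrow> 0 \<le> Q a c" unfolding Q_def by (rule Bw_i[OF X])
    have Qn: "0 \<le> (\<Sum>a<p. \<Sum>c<p. Q a c)" by (intro sum_nonneg) (auto intro: Q0)
    have S2: "Re (\<Sum>a<p. \<Sum>b<p. of_real (A$$(b,a)) * Bw n p X U a b b a) = (\<Sum>a<p. \<Sum>b<p. A$$(b,a) * R a b)"
      unfolding R_def by (simp add: Re_sum)
    have e1: "(\<Sum>a<p. \<Sum>b<p. A$$(b,a) * R a b) = (\<Sum>a<p. \<Sum>b<p. A$$(a,b) * R a b)"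
      by (intro sum.cong refl) (simp add: adj_sym[OF A])
    have e2: "(\<Sum>a<p. \<Sum>b<p. A$$(b,a) * R a b) = (\<Sum>a<p. \<Sum>b<p. A$$(a,b) * R b a)"
      by (rule sum.swap)
    have "2 * (\<Sum>a<p. \<Sum>b<p. A$$(b,a) * R a b) = (\<Sum>a<p. \<Sum>b<p. A$$(a,b) * (R a b + R b a))"
      using e1 e2 by (simp add: sum.distrib distrib_left)
    also have "\<dots> \<ge> (\<Sum>a<p. \<Sum>b<p. - (Q a b + Q b a))"
    proof (intro sum_mono)
      fix a b assume ab: "a \<in> {..<p}" "b \<in> {..<p}"
      have iii: "- (Q a b + Q b a) \<le> R a b + R b a" unfolding Q_def R_def
        using Bw_iii[OF X, of a b U] ab by simp
      have "A$$(a,b) = 0 \<or> A$$(a,b) = 1" using A ab unfolding adjacency_matrix_def by auto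
      thus "- (Q a b + Q b a) \<le> A$$(a,b) * (R a b + R b a)"
        using iii Q0[of b a] Q0[of a b] ab by auto
    qed
    also have "(\<Sum>a<p. \<Sum>b<p. - (Q a b + Q b a)) = - 2 * (\<Sum>a<p. \<Sum>c<p. Q a c)"
    proof -
      have "(\<Sum>a<p. \<Sum>b<p. Q b a) = (\<Sum>a<p. \<Sum>b<p. Q a b)" by (rule sum.swap)
      moreover have "(\<Sum>a<p. \<Sum>b<p. - (Q a b + Q b a)) = - ((\<Sum>a<p. \<Sum>b<p. Q a b) + (\<Sum>a<p. \<Sum>b<p. Q b a))"
        by (simp only: sum_negf sum.distrib)
      ultimately show ?thesis by simp
    qed
    finally have S2b: "- (\<Sum>a<p. \<Sum>c<p. Q a c) \<le> (\<Sum>a<p. \<Sum>b<p. A$$(b,a) * R a b)" by simp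
    have "Re (conjugate v \<bullet> (?Y *\<^sub>v v)) = t / real p * (\<Sum>a<p. \<Sum>c<p. Q a c) + (\<Sum>a<p. \<Sum>b<p. A$$(b,a) * R a b)"
      unfolding qf_gammaT[OF Ac v] U_def[symmetric] S2[symmetric] Q_def by (simp add: Re_scale Re_sum)
    also have "\<dots> \<ge> 1 * (\<Sum>a<p. \<Sum>c<p. Q a c) - (\<Sum>a<p. \<Sum>c<p. Q a c)"
    proof -
      have "1 * (\<Sum>a<p. \<Sum>c<p. Q a c) \<le> t / real p * (\<Sum>a<p. \<Sum>c<p. Q a c)"
        using t1 Qn by (rule mult_right_mono)
      thus ?thesis using S2b by linarith
    qed
    finally show "0 \<le> Re (conjugate v \<bullet> (?Y *\<^sub>v v))" by simp
  qed
  thus ?thesis unfolding psd_def using Y h by blast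
qed

definition Xd :: "nat \<Rightarrow> complex mat" where
  "Xd p = mat (p*p) (p*p) (\<lambda>(i,j). if i mod p = i div p \<and> j mod p = j div p then 1 else 0)"

lemma Xd_idx: assumes "r < p" "s < p" "a < p" "b < p"
  shows "Xd p $$ (r*p+a, s*p+b) = (if a = r \<and> b = s then 1 else 0)"
  using blk_idx[OF assms(1,3)] blk_idx[OF assms(2,4)] unfolding Xd_def by simp

lemma cnj_mult_nonneg: "0 \<le> Re (cnj z * (z::complex))"
proof -
  have "Re (cnj z * z) = (Re z)^2 + (Im z)^2" by (simp add: power2_eq_square)
  thus ?thesis by simp
qed

lemma Xd_psd: "psd (p*p) (Xd p)"
proof -
  have X: "Xd p \<in> carrier_mat (p*p) (p*p)" unfolding Xd_def by simp
  have h: "mat_adjoint (Xd p) = Xd p"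
    by (rule herm_of_blocks[OF X]) (auto simp: Xd_idx)
  have "0 \<le> Re (conjugate v \<bullet> (Xd p *\<^sub>v v))" if v: "v \<in> carrier_vec (p*p)" for v
  proof -
    define w where "w = (\<lambda>r. v $ (r*p+r))"
    have "conjugate v \<bullet> (Xd p *\<^sub>v v) = (\<Sum>r<p. \<Sum>s<p. cnj (w r) * w s)"
      unfolding qf_blocks[OF X v]
    proof (rule sum.cong[OF refl])
      fix r assume r: "r \<in> {..<p}"
      have "(\<Sum>a<p. \<Sum>s<p. \<Sum>b<p. cnj (v $ (r * p + a)) * Xd p $$ (r * p + a, s * p + b) * v $ (s * p + b))
        = (\<Sum>a<p. if a = r then (\<Sum>s<p. cnj (w r) * w s) else 0)"
      proof (rule sum.cong[OF refl])
        fix a assume a: "a \<in> {..<p}"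
        have "(\<Sum>s<p. \<Sum>b<p. cnj (v $ (r * p + a)) * Xd p $$ (r * p + a, s * p + b) * v $ (s * p + b))
           = (\<Sum>s<p. \<Sum>b<p. if b = s then (if a = r then cnj (w r) * w s else 0) else 0)"
          by (intro sum.cong refl) (use r a in \<open>auto simp: Xd_idx w_def\<close>)
        also have "\<dots> = (if a = r then (\<Sum>s<p. cnj (w r) * w s) else 0)"
          by (simp add: sum.delta')
        finally show "(\<Sum>s<p. \<Sum>b<p. cnj (v $ (r * p + a)) * Xd p $$ (r * p + a, s * p + b) * v $ (s * p + b))
           = (if a = r then (\<Sum>s<p. cnj (w r) * w s) else 0)" .
      qed
      also have "\<dots> = (\<Sum>s<p. cnj (w r) * w s)" using r by (simp add: sum.delta')
      finally show "(\<Sum>a<p. \<Sum>s<p. \<Sum>b<p. cnj (v $ (r * p + a)) * Xd p $$ (r * p + a, s * p + b) * v $ (s * p + b))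
        = (\<Sum>s<p. cnj (w r) * w s)" .
    qed
    also have "\<dots> = cnj (\<Sum>r<p. w r) * (\<Sum>s<p. w s)"
      by (simp add: sum_product)
    finally have eqS: "conjugate v \<bullet> (Xd p *\<^sub>v v) = cnj (\<Sum>r<p. w r) * (\<Sum>s<p. w s)" .
    show ?thesis unfolding eqS by (rule cnj_mult_nonneg)
  qed
  thus ?thesis unfolding psd_def using X h herm_Im[OF X h] by blast
qed

lemma Bw_Xd: assumes "a < p" "b < p" "c < p" "d < p"
  and U: "\<And>r e. r < p \<Longrightarrow> e < p \<Longrightarrow> U r e = (if r = e then complex_of_real (x0 r) else 0)"
  shows "Bw p p (Xd p) U a c b d = (if c = a \<and> d = b then complex_of_real (x0 a * x0 b) else 0)"
proof -
  have "Bw p p (Xd p) U a c b d = (\<Sum>r<p. \<Sum>s<p. if s = b then (if r = a then (if c = a \<and> d = b then complex_of_real (x0 a * x0 b) else 0) else 0) else 0)"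
    unfolding Bw_def by (intro sum.cong refl) (use assms in \<open>auto simp: Xd_idx\<close>)
  also have "\<dots> = (if c = a \<and> d = b then complex_of_real (x0 a * x0 b) else 0)"
    using assms by (simp add: sum.delta)
  finally show ?thesis .
qed

lemma necessity: assumes A: "adjacency_matrix p A" and p: "0 < p" and n0: "nrm p x0 = 1"
  and q: "qf p (\<lambda>i j. A$$(i,j)) x0 = lam" and CP: "completely_positive p (gamma A t)"
  shows "- (real p) * lam \<le> t"
proof (rule ccontr)
  assume "\<not> - (real p) * lam \<le> t"
  hence tl: "t / real p + lam < 0" using p by (simp add: field_simps)
  have Ac: "A \<in> carrier_mat p p" using A by (rule adj_carrier)
  have psdY: "psd (p*p) (ampl p p (gamma A t) (Xd p))" using CP Xd_psd unfolding completely_positive_def by blast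
  define u where "u = vec (p*p) (\<lambda>i. if i div p = i mod p then complex_of_real (x0 (i div p)) else 0)"
  have u: "u \<in> carrier_vec (p*p)" unfolding u_def by simp
  define U where "U = (\<lambda>r a. u$(r*p+a))"
  have Ur: "\<And>r e. r < p \<Longrightarrow> e < p \<Longrightarrow> U r e = (if r = e then complex_of_real (x0 r) else 0)"
    unfolding U_def u_def using blk_idx by auto
  have s1: "(\<Sum>a<p. \<Sum>c<p. Bw p p (Xd p) U a c a c) = 1"
  proof -
    have "(\<Sum>a<p. \<Sum>c<p. Bw p p (Xd p) U a c a c) = (\<Sum>a<p. \<Sum>c<p. if c = a then complex_of_real (x0 a * x0 a) else 0)"
      by (intro sum.cong refl) (simp add: Bw_Xd[OF _ _ _ _ Ur])
    also have "\<dots> = complex_of_real (nrm p x0)" unfolding nrm_def by (simp add: power2_eq_square)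
    finally show ?thesis using n0 by simp
  qed
  have s2: "(\<Sum>a<p. \<Sum>b<p. of_real (A$$(a,b)) * Bw p p (Xd p) U a a b b) = complex_of_real lam"
  proof -
    have "(\<Sum>a<p. \<Sum>b<p. of_real (A$$(a,b)) * Bw p p (Xd p) U a a b b) = (\<Sum>a<p. \<Sum>b<p. complex_of_real (A$$(a,b) * x0 a * x0 b))"
      by (intro sum.cong refl) (simp add: Bw_Xd[OF _ _ _ _ Ur])
    also have "\<dots> = complex_of_real (qf p (\<lambda>i j. A$$(i,j)) x0)" unfolding qf_def by simp
    finally show ?thesis using q by simp
  qed
  have "conjugate u \<bullet> (ampl p p (gamma A t) (Xd p) *\<^sub>v u) = of_real t / of_nat p * 1 + complex_of_real lam"
    using qf_gamma[OF Ac u, of t "Xd p"] s1 s2 unfolding U_def by simp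
  hence "Re (conjugate u \<bullet> (ampl p p (gamma A t) (Xd p) *\<^sub>v u)) = t / real p + lam"
    by (simp add: Re_scale[of t p 1, simplified])
  moreover have "0 \<le> Re (conjugate u \<bullet> (ampl p p (gamma A t) (Xd p) *\<^sub>v u))"
    using psdY u unfolding psd_def by blast
  ultimately show False using tl by simp
qed

theorem mainTheorem9:
  fixes p :: nat and A :: "real mat"
  assumes "adjacency_matrix p A"
    and "A \<noteq> 0\<^sub>m p p"
  shows "t_cp A = - real p * lambda_min A \<and> t_ppt A = - real p * lambda_min A"
proof -
  note adj = assms(1)
  have Ac: "A \<in> carrier_mat p p" using adj by (rule adj_carrier)
  have dr: "dim_row A = p" using Ac by simp
  have p: "0 < p"
  proof (rule ccontr)
    assume "\<not> 0 < p"
    hence "p = 0" by simp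
    hence "A = 0\<^sub>m p p" using Ac by (intro eq_matI) auto
    thus False using assms(2) by simp
  qed
  obtain x0 where n0: "nrm p x0 = 1" and q: "qf p (\<lambda>i j. A$$(i,j)) x0 = lambda_min A"
    and R: "\<forall>x. lambda_min A * nrm p x \<le> qf p (\<lambda>i j. A$$(i,j)) x"
    using lambda_min_prop[OF adj p] by blast
  define lam where "lam = lambda_min A"
  have lm1: "lam \<le> -1" unfolding lam_def by (rule lambda_min_le[OF adj assms(2) R])
  define t0 where "t0 = - real p * lam"
  have t0p: "real p \<le> t0"
  proof -
    have "real p * 1 \<le> real p * (- lam)" using lm1 by (intro mult_left_mono) auto
    thus ?thesis unfolding t0_def by simp
  qed
  have cp_iff: "completely_positive p (gamma A t) \<longleftrightarrow> t0 \<le> t" for t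
  proof
    assume "completely_positive p (gamma A t)"
    thus "t0 \<le> t" unfolding t0_def lam_def using necessity[OF adj p n0 q] by blast
  next
    assume t: "t0 \<le> t"
    have t0': "0 \<le> t" using t t0p by simp
    have tl: "0 \<le> t / real p + lambda_min A"
    proof -
      have "- lam \<le> t / real p" using t p unfolding t0_def by (simp add: field_simps)
      thus ?thesis unfolding lam_def by simp
    qed
    show "completely_positive p (gamma A t)" unfolding completely_positive_def
      using cp_suff[OF adj R t0' tl] by blast
  qed
  have ppt_iff: "is_PPT p (gamma A t) \<longleftrightarrow> t0 \<le> t" for t
  proof
    assume "is_PPT p (gamma A t)"
    thus "t0 \<le> t" using cp_iff unfolding is_PPT_def by blast
  next
    assume t: "t0 \<le> t"
    have t1: "1 \<le> t / real p" using t t0p p by (simp add: field_simps)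
    have "completely_positive p (\<lambda>X. (gamma A t X)\<^sup>T)" unfolding completely_positive_def
      using ppt_suff[OF adj t1] by blast
    thus "is_PPT p (gamma A t)" unfolding is_PPT_def using cp_iff t by blast
  qed
  have "t_cp A = t0" unfolding t_cp_def dr cp_iff by (rule Least_equality) auto
  moreover have "t_ppt A = t0" unfolding t_ppt_def dr ppt_iff by (rule Least_equality) auto
  ultimately show ?thesis unfolding t0_def lam_def by simp
qed

end
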